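(* Under the standing assumptions below, let $\pi\in\Pi$ with $\mathbb A^*_\pi>0$, let $\delta>0$, and let $\tilde\pi$ be an optimal solution of the trust-region subproblem $$\max_{\pi'\in\Pi} L_{\pi}(\pi')\quad\text{s.t.}\quad \sum_{s}\rho_{\pi}(s)\,D_{TV}(\pi(\cdot|s)\,\|\,\pi'(\cdot|s))\le\delta.$$ Let $r=\dfrac{\eta(\tilde\pi)-\eta(\pi)}{L_\pi(\tilde\pi)-L_\pi(\pi)}$, $p_0=\min_s\rho_0(s)$ and $\bar A=\max_{s,a}|A_\pi(s,a)|$. Then $$r\ \ge\ \min\left(1-\frac{4\bar A\gamma\delta^2}{p_0^2(1-\gamma)^2\,\mathbb A^*_\pi},\ 1-\frac{4\bar A\gamma\delta}{p_0^2(1-\gamma)^3\,\mathbb A^*_\pi}\right).$$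
   Context: Consider an infinite-horizon discounted Markov decision process $(\mathcal S,\mathcal A,P,r,\rho_0,\gamma)$ with finite state space $\mathcal S$, finite action space $\mathcal A$, transition probabilities $P(s'|s,a)$, bounded reward function $r:\mathcal S\times\mathcal A\to\mathbb R$, initial-state distribution $\rho_0$ with $\rho_0(s)>0$ for all $s\in\mathcal S$, and discount factor $\gamma\in(0,1)$. A policy $\pi$ assigns to each state $s$ a probability distribution $\pi(\cdot|s)$ on $\mathcal A$; $\Pi$ denotes the set of all policies. The total expected reward is $\eta(\pi)=\mathbb E_\pi[\sum_{t=0}^\infty\gamma^t r(s_t,a_t)]$, where $s_0\sim\rho_0$, $a_t\sim\pi(\cdot|s_t)$, $s_{t+1}\sim P(\cdot|s_t,a_t)$. The unnormalized discounted visitation frequency is $\rho_\pi(s)=\sum_{t=0}^\infty\gamma^t\mathbb P(s_t=s\mid\pi)$. $Q_\pi(s,a)=\mathbb E_\pi[\sum_{l\ge0}\gamma^l r(s_l,a_l)\mid s_0=s,a_0=a]$, $V_\pi(s)=\mathbb E_\pi[\sum_{l\ge0}\gamma^l r(s_l,a_l)\mid s_0=s]$, and the advantage is $A_\pi(s,a)=Q_\pi(s,a)-V_\pi(s)$. The surrogate function is $L_\pi(\tilde\pi)=\eta(\pi)+\sum_s\rho_\pi(s)\sum_a\tilde\pi(a|s)A_\pi(s,a)$. The policy advantage of $\pi'$ with respect to $\pi$ is $\mathbb A_\pi(\pi')=\sum_s\rho_\pi(s)\sum_a\pi'(a|s)A_\pi(s,a)$, and $\mathbb A^*_\pi=\max_{\pi'\in\Pi}\mathbb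 A_\pi(\pi')$. The total variation distance is $D_{TV}(p\|q)=\frac12\sum_x|p(x)-q(x)|$. *)

theory Defs
  imports "HOL-Analysis.Analysis"
begin

text \<open>Finite MDP. States of type 's (finite), actions of type 'a (finite).
  Transition kernel P s a s' = P(s'|s,a); policy p s a = p(a|s).\<close>

definition is_policy :: "('s::finite \<Rightarrow> 'a::finite \<Rightarrow> real) \<Rightarrow> bool" where
  "is_policy p \<longleftrightarrow> (\<forall>s a. 0 \<le> p s a) \<and> (\<forall>s. (\<Sum>a\<in>UNIV. p s a) = 1)"

fun state_dist :: "('s::finite \<Rightarrow> 'a::finite \<Rightarrow> 's \<Rightarrow> real) \<Rightarrow> ('s \<Rightarrow> 'a \<Rightarrow> real)
    \<Rightarrow> ('s \<Rightarrow> real) \<Rightarrow> nat \<Rightarrow> 's \<Rightarrow> real" where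
  "state_dist P p mu 0 = mu"
| "state_dist P p mu (Suc t) =
     (\<lambda>s'. \<Sum>s\<in>UNIV. \<Sum>a\<in>UNIV. state_dist P p mu t s * p s a * P s a s')"

definition exp_reward :: "('s::finite \<Rightarrow> 'a::finite \<Rightarrow> 's \<Rightarrow> real) \<Rightarrow> ('s \<Rightarrow> 'a \<Rightarrow> real)
    \<Rightarrow> ('s \<Rightarrow> 'a \<Rightarrow> real) \<Rightarrow> ('s \<Rightarrow> real) \<Rightarrow> nat \<Rightarrow> real" where
  "exp_reward P r p mu t = (\<Sum>s\<in>UNIV. state_dist P p mu t s * (\<Sum>a\<in>UNIV. p s a * r s a))"

definition eta :: "('s::finite \<Rightarrow> 'a::finite \<Rightarrow> 's \<Rightarrow> real) \<Rightarrow> ('s \<Rightarrow> 'a \<Rightarrow> real) \<Rightarrow> real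
    \<Rightarrow> ('s \<Rightarrow> 'a \<Rightarrow> real) \<Rightarrow> ('s \<Rightarrow> real) \<Rightarrow> real" where
  "eta P r \<gamma> p mu = (\<Sum>t. \<gamma> ^ t * exp_reward P r p mu t)"

definition visit :: "('s::finite \<Rightarrow> 'a::finite \<Rightarrow> 's \<Rightarrow> real) \<Rightarrow> real
    \<Rightarrow> ('s \<Rightarrow> 'a \<Rightarrow> real) \<Rightarrow> ('s \<Rightarrow> real) \<Rightarrow> 's \<Rightarrow> real" where
  "visit P \<gamma> p mu s = (\<Sum>t. \<gamma> ^ t * state_dist P p mu t s)"

definition Vfun :: "('s::finite \<Rightarrow> 'a::finite \<Rightarrow> 's \<Rightarrow> real) \<Rightarrow> ('s \<Rightarrow> 'a \<Rightarrow> real) \<Rightarrow> real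
    \<Rightarrow> ('s \<Rightarrow> 'a \<Rightarrow> real) \<Rightarrow> 's \<Rightarrow> real" where
  "Vfun P r \<gamma> p s = eta P r \<gamma> p (\<lambda>s'. if s' = s then 1 else 0)"

text \<open>Q(s,a): reward at time 0 is r(s,a); from time 1 on the state distribution
  starts from P(.|s,a).\<close>
definition Qfun :: "('s::finite \<Rightarrow> 'a::finite \<Rightarrow> 's \<Rightarrow> real) \<Rightarrow> ('s \<Rightarrow> 'a \<Rightarrow> real) \<Rightarrow> real
    \<Rightarrow> ('s \<Rightarrow> 'a \<Rightarrow> real) \<Rightarrow> 's \<Rightarrow> 'a \<Rightarrow> real" where
  "Qfun P r \<gamma> p s a = r s a + (\<Sum>l. \<gamma> ^ Suc l * exp_reward P r p (P s a) l)"

definition Adv :: "('s::finite \<Rightarrow> 'a::finite \<Rightarrow> 's \<Rightarrow> real) \<Rightarrow> ('s \<Rightarrow> 'a \<Rightarrow> real) \<Rightarrow> real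
    \<Rightarrow> ('s \<Rightarrow> 'a \<Rightarrow> real) \<Rightarrow> 's \<Rightarrow> 'a \<Rightarrow> real" where
  "Adv P r \<gamma> p s a = Qfun P r \<gamma> p s a - Vfun P r \<gamma> p s"

definition pol_adv :: "('s::finite \<Rightarrow> 'a::finite \<Rightarrow> 's \<Rightarrow> real) \<Rightarrow> ('s \<Rightarrow> 'a \<Rightarrow> real) \<Rightarrow> real
    \<Rightarrow> ('s \<Rightarrow> real) \<Rightarrow> ('s \<Rightarrow> 'a \<Rightarrow> real) \<Rightarrow> ('s \<Rightarrow> 'a \<Rightarrow> real) \<Rightarrow> real" where
  "pol_adv P r \<gamma> mu p q =
     (\<Sum>s\<in>UNIV. visit P \<gamma> p mu s * (\<Sum>a\<in>UNIV. q s a * Adv P r \<gamma> p s a))"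

definition surrogate :: "('s::finite \<Rightarrow> 'a::finite \<Rightarrow> 's \<Rightarrow> real) \<Rightarrow> ('s \<Rightarrow> 'a \<Rightarrow> real) \<Rightarrow> real
    \<Rightarrow> ('s \<Rightarrow> real) \<Rightarrow> ('s \<Rightarrow> 'a \<Rightarrow> real) \<Rightarrow> ('s \<Rightarrow> 'a \<Rightarrow> real) \<Rightarrow> real" where
  "surrogate P r \<gamma> mu p q =
     eta P r \<gamma> p mu + (\<Sum>s\<in>UNIV. visit P \<gamma> p mu s * (\<Sum>a\<in>UNIV. q s a * Adv P r \<gamma> p s a))"

definition max_adv :: "('s::finite \<Rightarrow> 'a::finite \<Rightarrow> 's \<Rightarrow> real) \<Rightarrow> ('s \<Rightarrow> 'a \<Rightarrow> real) \<Rightarrow> real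
    \<Rightarrow> ('s \<Rightarrow> real) \<Rightarrow> ('s \<Rightarrow> 'a \<Rightarrow> real) \<Rightarrow> real" where
  "max_adv P r \<gamma> mu p = Sup {pol_adv P r \<gamma> mu p q | q. is_policy q}"

definition dtv :: "('x::finite \<Rightarrow> real) \<Rightarrow> ('x \<Rightarrow> real) \<Rightarrow> real" where
  "dtv p q = (1/2) * (\<Sum>x\<in>UNIV. \<bar>p x - q x\<bar>)"

definition tv_div :: "('s::finite \<Rightarrow> 'a::finite \<Rightarrow> 's \<Rightarrow> real) \<Rightarrow> real
    \<Rightarrow> ('s \<Rightarrow> real) \<Rightarrow> ('s \<Rightarrow> 'a \<Rightarrow> real) \<Rightarrow> ('s \<Rightarrow> 'a \<Rightarrow> real) \<Rightarrow> real" where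
  "tv_div P \<gamma> mu p q = (\<Sum>s\<in>UNIV. visit P \<gamma> p mu s * dtv (p s) (q s))"

end

theory Submission imports Defs begin

locale mdp =
  fixes P :: "'s::finite \<Rightarrow> 'a::finite \<Rightarrow> 's \<Rightarrow> real"
  assumes Pnn: "\<And>s a s'. 0 \<le> P s a s'"
    and Psum: "\<And>s a. (\<Sum>s'\<in>UNIV. P s a s') = 1"
begin

lemma pol_nn: "is_policy p \<Longrightarrow> 0 \<le> p s a" unfolding is_policy_def by auto
lemma pol_sum: "is_policy p \<Longrightarrow> (\<Sum>a\<in>UNIV. p s a) = 1" unfolding is_policy_def by auto
lemma pol_le1: "is_policy p \<Longrightarrow> p s a \<le> 1"
proof -
  assume h: "is_policy p"
  have "p s a \<le> (\<Sum>a\<in>UNIV. p s a)" by (rule member_le_sum) (auto simp: pol_nn[OF h])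
  thus ?thesis using pol_sum[OF h] by simp
qed

lemma swap3: "(\<Sum>x\<in>A. \<Sum>y\<in>B. \<Sum>z\<in>C. f x y z) = (\<Sum>y\<in>B. \<Sum>z\<in>C. \<Sum>x\<in>A. f x y z)"
proof -
  have "(\<Sum>x\<in>A. \<Sum>y\<in>B. \<Sum>z\<in>C. f x y z) = (\<Sum>y\<in>B. \<Sum>x\<in>A. \<Sum>z\<in>C. f x y z)" by (rule sum.swap)
  also have "\<dots> = (\<Sum>y\<in>B. \<Sum>z\<in>C. \<Sum>x\<in>A. f x y z)" by (rule sum.cong[OF refl], rule sum.swap)
  finally show ?thesis .
qed

lemma step_sum:
  "(\<Sum>s'\<in>UNIV. \<Sum>s\<in>UNIV. \<Sum>a\<in>UNIV. f s a * P s a s') = (\<Sum>s\<in>UNIV. \<Sum>a\<in>UNIV. f s a)"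
  by (subst swap3) (simp add: sum_distrib_left[symmetric] Psum)

lemma sd_abs:
  assumes pol: "is_policy p"
  shows "(\<Sum>s\<in>UNIV. \<bar>state_dist P p mu t s\<bar>) \<le> (\<Sum>s\<in>UNIV. \<bar>mu s\<bar>)"
proof (induction t)
  case 0 then show ?case by simp
next
  case (Suc t)
  let ?d = "state_dist P p mu t"
  have "(\<Sum>s'\<in>UNIV. \<bar>state_dist P p mu (Suc t) s'\<bar>)
      \<le> (\<Sum>s'\<in>UNIV. \<Sum>s\<in>UNIV. \<Sum>a\<in>UNIV. (\<bar>?d s\<bar> * p s a) * P s a s')"
    apply (rule sum_mono)
    apply simp
    apply (rule order_trans[OF sum_abs], rule sum_mono)
    apply (rule order_trans[OF sum_abs], rule sum_mono)
    by (simp add: abs_mult pol_nn[OF pol] Pnn)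
  also have "\<dots> = (\<Sum>s\<in>UNIV. \<Sum>a\<in>UNIV. \<bar>?d s\<bar> * p s a)" by (rule step_sum)
  also have "\<dots> = (\<Sum>s\<in>UNIV. \<bar>?d s\<bar>)" by (simp add: sum_distrib_left[symmetric] pol_sum[OF pol])
  finally show ?case using Suc by linarith
qed

lemma sd_nn:
  assumes pol: "is_policy p" and mu: "\<And>s. 0 \<le> mu s"
  shows "0 \<le> state_dist P p mu t s"
  by (induction t arbitrary: s) (auto intro!: sum_nonneg mult_nonneg_nonneg simp: mu pol_nn[OF pol] Pnn)

lemma sd_sum:
  assumes pol: "is_policy p"
  shows "(\<Sum>s\<in>UNIV. state_dist P p mu t s) = (\<Sum>s\<in>UNIV. mu s)"
proof (induction t)
  case 0 then show ?case by simp
next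
  case (Suc t)
  let ?d = "state_dist P p mu t"
  have "(\<Sum>s'\<in>UNIV. state_dist P p mu (Suc t) s')
      = (\<Sum>s'\<in>UNIV. \<Sum>s\<in>UNIV. \<Sum>a\<in>UNIV. (?d s * p s a) * P s a s')" by simp
  also have "\<dots> = (\<Sum>s\<in>UNIV. \<Sum>a\<in>UNIV. ?d s * p s a)" by (rule step_sum)
  also have "\<dots> = (\<Sum>s\<in>UNIV. ?d s)" by (simp add: sum_distrib_left[symmetric] pol_sum[OF pol])
  finally show ?case using Suc by linarith
qed

lemma sd_lin:
  assumes "finite I"
  shows "state_dist P p (\<lambda>x. \<Sum>i\<in>I. c i * nu i x) t y = (\<Sum>i\<in>I. c i * state_dist P p (nu i) t y)"
proof (induction t arbitrary: y)
  case 0 then show ?case by simp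
next
  case (Suc t)
  have "state_dist P p (\<lambda>x. \<Sum>i\<in>I. c i * nu i x) (Suc t) y
     = (\<Sum>s\<in>UNIV. \<Sum>a\<in>UNIV. \<Sum>i\<in>I. c i * (state_dist P p (nu i) t s * p s a * P s a y))"
    by (simp add: Suc sum_distrib_right mult.assoc)
  also have "\<dots> = (\<Sum>i\<in>I. \<Sum>s\<in>UNIV. \<Sum>a\<in>UNIV. c i * (state_dist P p (nu i) t s * p s a * P s a y))"
    by (rule swap3[symmetric])
  also have "\<dots> = (\<Sum>i\<in>I. c i * state_dist P p (nu i) (Suc t) y)"
    by (simp add: sum_distrib_left mult.assoc)
  finally show ?case .
qed

lemma sd_shift: "state_dist P p mu (Suc t) = state_dist P p (state_dist P p mu 1) t"
  by (induction t) auto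


lemma sd_shift_fun: "state_dist P p mu (Suc t) x = state_dist P p (state_dist P p mu (Suc 0)) t x"
  using sd_shift[of p mu t] by simp

definition Rm :: "('s \<Rightarrow> 'a \<Rightarrow> real) \<Rightarrow> real" where
  "Rm r = (\<Sum>s\<in>UNIV. \<Sum>a\<in>UNIV. \<bar>r s a\<bar>)"

lemma Rm_ge: "(\<Sum>a\<in>UNIV. \<bar>r s a\<bar>) \<le> Rm r"
  unfolding Rm_def by (rule member_le_sum[where f="\<lambda>s. \<Sum>a\<in>UNIV. \<bar>r s a\<bar>"]) (auto intro: sum_nonneg)

lemma ER_bound:
  assumes pol: "is_policy p"
  shows "\<bar>exp_reward P r p mu t\<bar> \<le> (\<Sum>s\<in>UNIV. \<bar>mu s\<bar>) * Rm r"
proof -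
  let ?d = "state_dist P p mu t"
  have X: "\<bar>\<Sum>a\<in>UNIV. p s a * r s a\<bar> \<le> Rm r" for s
  proof -
    have "\<bar>\<Sum>a\<in>UNIV. p s a * r s a\<bar> \<le> (\<Sum>a\<in>UNIV. \<bar>r s a\<bar>)"
      apply (rule order_trans[OF sum_abs], rule sum_mono)
      using pol_nn[OF pol, of s] pol_le1[OF pol, of s]
      by (simp add: abs_mult mult_left_le_one_le)
    thus ?thesis using Rm_ge[of r s] by linarith
  qed
  have "\<bar>exp_reward P r p mu t\<bar> \<le> (\<Sum>s\<in>UNIV. \<bar>?d s\<bar> * Rm r)"
    unfolding exp_reward_def
    apply (rule order_trans[OF sum_abs], rule sum_mono)
    by (simp add: abs_mult X mult_left_mono)
  also have "\<dots> = (\<Sum>s\<in>UNIV. \<bar>?d s\<bar>) * Rm r" by (simp add: sum_distrib_right)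
  also have "\<dots> \<le> (\<Sum>s\<in>UNIV. \<bar>mu s\<bar>) * Rm r"
    apply (rule mult_right_mono[OF sd_abs[OF pol]])
    unfolding Rm_def by (auto intro: sum_nonneg)
  finally show ?thesis .
qed

lemma summable_bnd:
  fixes f :: "nat \<Rightarrow> real"
  assumes "\<And>t. \<bar>f t\<bar> \<le> C" "0 \<le> g" "g < 1"
  shows "summable (\<lambda>t. g ^ t * f t)"
proof (rule summable_comparison_test)
  show "\<exists>N. \<forall>n\<ge>N. norm (g ^ n * f n) \<le> g ^ n * C"
    using assms by (auto simp: abs_mult intro!: mult_left_mono)
  show "summable (\<lambda>n. g ^ n * C)" using assms by (intro summable_mult2) simp
qed

lemma summable_ER:
  assumes pol: "is_policy p" and g: "0 \<le> g" "g < 1"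
  shows "summable (\<lambda>t. g ^ t * exp_reward P r p mu t)"
  by (rule summable_bnd[OF ER_bound[OF pol] g])

lemma ER_lin:
  assumes "finite I"
  shows "exp_reward P r p (\<lambda>x. \<Sum>i\<in>I. c i * nu i x) t = (\<Sum>i\<in>I. c i * exp_reward P r p (nu i) t)"
proof -
  let ?X = "\<lambda>s. \<Sum>a\<in>UNIV. p s a * r s a"
  have "exp_reward P r p (\<lambda>x. \<Sum>i\<in>I. c i * nu i x) t
      = (\<Sum>s\<in>UNIV. (\<Sum>i\<in>I. c i * state_dist P p (nu i) t s) * ?X s)"
    unfolding exp_reward_def sd_lin[OF assms] ..
  also have "\<dots> = (\<Sum>s\<in>UNIV. \<Sum>i\<in>I. c i * (state_dist P p (nu i) t s * ?X s))"
    by (simp add: sum_distrib_right mult.assoc)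
  also have "\<dots> = (\<Sum>i\<in>I. \<Sum>s\<in>UNIV. c i * (state_dist P p (nu i) t s * ?X s))"
    by (rule sum.swap)
  also have "\<dots> = (\<Sum>i\<in>I. c i * exp_reward P r p (nu i) t)"
    unfolding exp_reward_def by (simp add: sum_distrib_left)
  finally show ?thesis .
qed

lemma eta_lin:
  assumes I: "finite I" and pol: "is_policy p" and g: "0 \<le> g" "g < 1"
  shows "eta P r g p (\<lambda>x. \<Sum>i\<in>I. c i * nu i x) = (\<Sum>i\<in>I. c i * eta P r g p (nu i))"
proof -
  have "eta P r g p (\<lambda>x. \<Sum>i\<in>I. c i * nu i x) = (\<Sum>t. \<Sum>i\<in>I. c i * (g ^ t * exp_reward P r p (nu i) t))"
    unfolding eta_def ER_lin[OF I] by (simp add: sum_distrib_left mult.left_commute)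
  also have "\<dots> = (\<Sum>i\<in>I. \<Sum>t. c i * (g ^ t * exp_reward P r p (nu i) t))"
    by (rule suminf_sum) (intro summable_mult summable_ER[OF pol g])
  also have "\<dots> = (\<Sum>i\<in>I. c i * eta P r g p (nu i))"
    unfolding eta_def by (simp add: suminf_mult summable_ER[OF pol g])
  finally show ?thesis .
qed

lemma eta_step:
  assumes pol: "is_policy p" and g: "0 \<le> g" "g < 1"
  shows "eta P r g p mu = exp_reward P r p mu 0 + g * eta P r g p (state_dist P p mu (Suc 0))"
proof -
  let ?f = "\<lambda>t. g ^ t * exp_reward P r p mu t"
  have s: "summable ?f" by (rule summable_ER[OF pol g])
  have "(\<Sum>t. ?f (Suc t)) = (\<Sum>t. g * (g ^ t * exp_reward P r p (state_dist P p mu (Suc 0)) t))"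
  proof (rule arg_cong[where f=suminf], rule ext)
    fix t
    have "state_dist P p mu (Suc t) = state_dist P p (state_dist P p mu (Suc 0)) t"
      using sd_shift[of p mu t] by simp
    thus "?f (Suc t) = g * (g ^ t * exp_reward P r p (state_dist P p mu (Suc 0)) t)"
      unfolding exp_reward_def by simp
  qed
  also have "\<dots> = g * eta P r g p (state_dist P p mu (Suc 0))"
    unfolding eta_def by (rule suminf_mult, rule summable_ER[OF pol g])
  finally have "(\<Sum>t. ?f (Suc t)) = g * eta P r g p (state_dist P p mu (Suc 0))" .
  moreover have "(\<Sum>t. ?f (Suc t)) = eta P r g p mu - ?f 0"
    unfolding eta_def by (rule suminf_split_head[OF s])
  ultimately show ?thesis by simp
qed

lemma sum_delta_mult: fixes s :: "'z::finite" shows "(\<Sum>x\<in>UNIV. (if x = s then 1 else 0) * f x) = (f s::real)"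
proof -
  have "\<And>x. (if x = s then 1 else 0) * f x = (if x = s then f x else 0)" by simp
  hence "(\<Sum>x\<in>UNIV. (if x = s then 1 else 0) * f x) = (\<Sum>x\<in>UNIV. (if x = s then f x else 0))" by simp
  also have "\<dots> = f s" by (subst sum.delta) auto
  finally show ?thesis .
qed

lemma sum_delta2: fixes s :: "'s" shows "(\<Sum>sb\<in>UNIV. \<Sum>a\<in>UNIV. (if sb = s then 1 else 0) * p sb a * P sb a s') = (\<Sum>a\<in>UNIV. p s a * (P s a s'::real))"
  by (subst sum.swap) (simp add: mult.assoc sum_delta_mult)

definition dl :: "'s \<Rightarrow> 's \<Rightarrow> real" where "dl s = (\<lambda>s'. if s' = s then 1 else 0)"

lemma decomp: "mu = (\<lambda>x. \<Sum>s\<in>UNIV. mu s * dl s x)"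
  by (auto simp: dl_def if_distrib cong: if_cong)

lemma eta_decomp:
  assumes pol: "is_policy p" and g: "0 \<le> g" "g < 1"
  shows "eta P r g p mu = (\<Sum>s\<in>UNIV. mu s * Vfun P r g p s)"
  apply (subst decomp[of mu])
  unfolding Vfun_def dl_def[symmetric]
  by (rule eta_lin[OF _ pol g]) simp

lemma Q_form:
  assumes pol: "is_policy p" and g: "0 \<le> g" "g < 1"
  shows "Qfun P r g p s a = r s a + g * (\<Sum>s'\<in>UNIV. P s a s' * Vfun P r g p s')"
proof -
  have "(\<Sum>l. g ^ Suc l * exp_reward P r p (P s a) l) = g * eta P r g p (P s a)"
    unfolding eta_def
    by (simp add: mult.assoc suminf_mult summable_ER[OF pol g])
  thus ?thesis unfolding Qfun_def eta_decomp[OF pol g, where mu = "P s a"] by simp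
qed

lemma bellman:
  assumes pol: "is_policy p" and g: "0 \<le> g" "g < 1"
  shows "Vfun P r g p s = (\<Sum>a\<in>UNIV. p s a * Qfun P r g p s a)"
proof -
  have e0: "exp_reward P r p (dl s) 0 = (\<Sum>a\<in>UNIV. p s a * r s a)"
    by (simp add: exp_reward_def dl_def sum_delta_mult)
  have "eta P r g p (state_dist P p (dl s) (Suc 0))
      = (\<Sum>s'\<in>UNIV. (\<Sum>a\<in>UNIV. p s a * P s a s') * Vfun P r g p s')"
    by (subst eta_decomp[OF pol g]) (simp add: dl_def sum_delta2)
  also have "\<dots> = (\<Sum>a\<in>UNIV. p s a * (\<Sum>s'\<in>UNIV. P s a s' * Vfun P r g p s'))"
    by (simp add: sum_distrib_left sum_distrib_right mult.assoc, rule sum.swap)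
  finally have e1: "eta P r g p (state_dist P p (dl s) (Suc 0)) = \<dots>" .
  have "Vfun P r g p s = eta P r g p (dl s)" unfolding Vfun_def dl_def by simp
  also have "\<dots> = (\<Sum>a\<in>UNIV. p s a * r s a) + g * (\<Sum>a\<in>UNIV. p s a * (\<Sum>s'\<in>UNIV. P s a s' * Vfun P r g p s'))"
    by (subst eta_step[OF pol g], simp only: e0 e1)
  also have "\<dots> = (\<Sum>a\<in>UNIV. p s a * Qfun P r g p s a)"
    by (simp add: Q_form[OF pol g] distrib_left sum.distrib sum_distrib_left mult.left_commute)
  finally show ?thesis .
qed

lemma adv_zero:
  assumes pol: "is_policy p" and g: "0 \<le> g" "g < 1"
  shows "(\<Sum>a\<in>UNIV. p s a * Adv P r g p s a) = 0"
  by (simp add: Adv_def right_diff_distrib sum_subtractf bellman[OF pol g, symmetric]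
      sum_distrib_right[symmetric] pol_sum[OF pol])


lemma sd_bnd:
  assumes pol: "is_policy p"
  shows "\<bar>state_dist P p mu t s\<bar> \<le> (\<Sum>s\<in>UNIV. \<bar>mu s\<bar>)"
proof -
  have "\<bar>state_dist P p mu t s\<bar> \<le> (\<Sum>s\<in>UNIV. \<bar>state_dist P p mu t s\<bar>)"
    by (rule member_le_sum[where f="\<lambda>s. \<bar>state_dist P p mu t s\<bar>"]) auto
  thus ?thesis using sd_abs[OF pol, of mu t] by linarith
qed

lemma summable_visit:
  assumes pol: "is_policy p" and g: "0 \<le> g" "g < 1"
  shows "summable (\<lambda>t. g ^ t * state_dist P p mu t s)"
  by (rule summable_bnd[OF sd_bnd[OF pol] g])

lemma next_W:
  "(\<Sum>s\<in>UNIV. d s * (\<Sum>a\<in>UNIV. q s a * (\<Sum>s'\<in>UNIV. P s a s' * V s')))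
   = (\<Sum>s'\<in>UNIV. (\<Sum>s\<in>UNIV. \<Sum>a\<in>UNIV. d s * q s a * P s a s') * V s')"
proof -
  have "(\<Sum>s'\<in>UNIV. (\<Sum>s\<in>UNIV. \<Sum>a\<in>UNIV. d s * q s a * P s a s') * V s')
      = (\<Sum>s'\<in>UNIV. \<Sum>s\<in>UNIV. \<Sum>a\<in>UNIV. d s * (q s a * (P s a s' * V s')))"
    by (simp add: sum_distrib_right mult.assoc)
  also have "\<dots> = (\<Sum>s\<in>UNIV. \<Sum>a\<in>UNIV. \<Sum>s'\<in>UNIV. d s * (q s a * (P s a s' * V s')))"
    by (rule swap3)
  also have "\<dots> = (\<Sum>s\<in>UNIV. d s * (\<Sum>a\<in>UNIV. q s a * (\<Sum>s'\<in>UNIV. P s a s' * V s')))"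
    by (simp add: sum_distrib_left)
  finally show ?thesis by simp
qed

lemma perf_diff:
  assumes pol: "is_policy p" and polq: "is_policy q" and g: "0 \<le> g" "g < 1"
  shows "eta P r g q mu - eta P r g p mu
         = (\<Sum>s\<in>UNIV. visit P g q mu s * (\<Sum>a\<in>UNIV. q s a * Adv P r g p s a))"
proof -
  let ?V = "Vfun P r g p"
  let ?G = "\<lambda>s. \<Sum>a\<in>UNIV. q s a * Adv P r g p s a"
  let ?d = "state_dist P q mu"
  let ?W = "\<lambda>t. \<Sum>s\<in>UNIV. ?d t s * ?V s"
  let ?h = "\<lambda>t. g ^ t * ?W t"
  have Gform: "?G s = (\<Sum>a\<in>UNIV. q s a * r s a)
      + g * (\<Sum>a\<in>UNIV. q s a * (\<Sum>s'\<in>UNIV. P s a s' * ?V s')) - ?V s" for s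
    by (simp add: Adv_def Q_form[OF pol g] right_diff_distrib distrib_left sum.distrib sum_subtractf
        sum_distrib_right[symmetric] pol_sum[OF polq] sum_distrib_left mult.left_commute)
  have step: "(\<Sum>s\<in>UNIV. ?d t s * ?G s) = exp_reward P r q mu t + g * ?W (Suc t) - ?W t" for t
  proof -
    have "(\<Sum>s\<in>UNIV. ?d t s * ?G s) = (\<Sum>s\<in>UNIV. ?d t s * (\<Sum>a\<in>UNIV. q s a * r s a))
      + g * (\<Sum>s\<in>UNIV. ?d t s * (\<Sum>a\<in>UNIV. q s a * (\<Sum>s'\<in>UNIV. P s a s' * ?V s'))) - ?W t"
      by (simp add: Gform right_diff_distrib distrib_left sum.distrib sum_subtractf
        sum_distrib_left mult.left_commute)
    also have "\<dots> = exp_reward P r q mu t + g * ?W (Suc t) - ?W t"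
      unfolding next_W exp_reward_def by simp
    finally show ?thesis .
  qed
  have Wb: "\<bar>?W t\<bar> \<le> (\<Sum>s\<in>UNIV. \<bar>mu s\<bar>) * (\<Sum>s\<in>UNIV. \<bar>?V s\<bar>)" for t
  proof -
    have "\<bar>?W t\<bar> \<le> (\<Sum>s\<in>UNIV. (\<Sum>s\<in>UNIV. \<bar>mu s\<bar>) * \<bar>?V s\<bar>)"
      apply (rule order_trans[OF sum_abs], rule sum_mono)
      by (simp add: abs_mult mult_right_mono sd_bnd[OF polq])
    thus ?thesis by (simp add: sum_distrib_left)
  qed
  have hs: "summable ?h" by (rule summable_bnd[OF Wb g])
  have h0: "?h \<longlonglongrightarrow> 0" by (rule summable_LIMSEQ_zero[OF hs])
  have A: "(\<lambda>t. g ^ t * exp_reward P r q mu t) sums eta P r g q mu"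
    unfolding eta_def by (rule summable_sums[OF summable_ER[OF polq g]])
  have B: "(\<lambda>t. ?h (Suc t) - ?h t) sums (0 - ?h 0)" by (rule telescope_sums[OF h0])
  have C: "(\<lambda>t. g ^ t * (\<Sum>s\<in>UNIV. ?d t s * ?G s)) sums (eta P r g q mu + (0 - ?h 0))"
  proof -
    have "(\<lambda>t. g ^ t * exp_reward P r q mu t + (?h (Suc t) - ?h t)) sums (eta P r g q mu + (0 - ?h 0))"
      by (rule sums_add[OF A B])
    moreover have "(\<lambda>t. g ^ t * exp_reward P r q mu t + (?h (Suc t) - ?h t))
        = (\<lambda>t. g ^ t * (\<Sum>s\<in>UNIV. ?d t s * ?G s))"
      by (rule ext, simp only: step) (simp add: algebra_simps)
    ultimately show ?thesis by simp
  qed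
  have D: "(\<lambda>t. g ^ t * (\<Sum>s\<in>UNIV. ?d t s * ?G s)) sums (\<Sum>s\<in>UNIV. visit P g q mu s * ?G s)"
  proof -
    have "(\<lambda>t. \<Sum>s\<in>UNIV. g ^ t * ?d t s * ?G s) sums (\<Sum>s\<in>UNIV. visit P g q mu s * ?G s)"
      apply (rule sums_sum)
      unfolding visit_def
      by (rule sums_mult2, rule summable_sums, rule summable_visit[OF polq g])
    thus ?thesis by (simp add: sum_distrib_left mult.assoc)
  qed
  have "?h 0 = eta P r g p mu" by (simp add: eta_decomp[OF pol g])
  thus ?thesis using sums_unique2[OF C D] by simp
qed


lemma en_step:
  assumes pol: "is_policy p" and polq: "is_policy q" and mu: "\<And>s. 0 \<le> mu s" "(\<Sum>s\<in>UNIV. mu s) = 1"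
    and D: "\<And>s. dtv (p s) (q s) \<le> D"
  shows "(\<Sum>s\<in>UNIV. \<bar>state_dist P q mu (Suc t) s - state_dist P p mu (Suc t) s\<bar>)
         \<le> (\<Sum>s\<in>UNIV. \<bar>state_dist P q mu t s - state_dist P p mu t s\<bar>) + 2 * D"
proof -
  let ?dq = "state_dist P q mu t" and ?dp = "state_dist P p mu t"
  let ?Y = "\<lambda>s a. \<bar>?dq s - ?dp s\<bar> * p s a + ?dq s * \<bar>q s a - p s a\<bar>"
  have dqnn: "0 \<le> ?dq s" for s by (rule sd_nn[OF polq mu(1)])
  have eq: "state_dist P q mu (Suc t) s' - state_dist P p mu (Suc t) s'
     = (\<Sum>s\<in>UNIV. \<Sum>a\<in>UNIV. ((?dq s - ?dp s) * p s a + ?dq s * (q s a - p s a)) * P s a s')" for s'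
  proof -
    have "state_dist P q mu (Suc t) s' - state_dist P p mu (Suc t) s'
      = (\<Sum>s\<in>UNIV. \<Sum>a\<in>UNIV. ?dq s * q s a * P s a s' - ?dp s * p s a * P s a s')"
      by (simp add: sum_subtractf)
    also have "\<dots> = (\<Sum>s\<in>UNIV. \<Sum>a\<in>UNIV. ((?dq s - ?dp s) * p s a + ?dq s * (q s a - p s a)) * P s a s')"
      by (rule sum.cong[OF refl], rule sum.cong[OF refl]) (simp add: algebra_simps)
    finally show ?thesis .
  qed
  have "(\<Sum>s'\<in>UNIV. \<bar>state_dist P q mu (Suc t) s' - state_dist P p mu (Suc t) s'\<bar>)
      \<le> (\<Sum>s'\<in>UNIV. \<Sum>s\<in>UNIV. \<Sum>a\<in>UNIV. ?Y s a * P s a s')"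
    apply (rule sum_mono)
    unfolding eq
    apply (rule order_trans[OF sum_abs], rule sum_mono)
    apply (rule order_trans[OF sum_abs], rule sum_mono)
    apply (simp only: abs_mult[of _ "P _ _ _"] abs_of_nonneg[OF Pnn])
    apply (rule mult_right_mono[OF _ Pnn])
    apply (rule order_trans[OF abs_triangle_ineq])
    by (simp add: abs_mult abs_of_nonneg[OF pol_nn[OF pol]] abs_of_nonneg[OF dqnn])
  also have "\<dots> = (\<Sum>s\<in>UNIV. \<Sum>a\<in>UNIV. ?Y s a)" by (rule step_sum)
  also have "\<dots> = (\<Sum>s\<in>UNIV. \<bar>?dq s - ?dp s\<bar>) + (\<Sum>s\<in>UNIV. ?dq s * (2 * dtv (p s) (q s)))"
    by (simp add: sum.distrib sum_distrib_left[symmetric] pol_sum[OF pol] dtv_def abs_minus_commute)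
  also have "\<dots> \<le> (\<Sum>s\<in>UNIV. \<bar>?dq s - ?dp s\<bar>) + (\<Sum>s\<in>UNIV. ?dq s * (2 * D))"
    by (intro add_left_mono sum_mono mult_left_mono) (auto simp: D dqnn)
  also have "\<dots> = (\<Sum>s\<in>UNIV. \<bar>?dq s - ?dp s\<bar>) + 2 * D"
    by (simp add: sum_distrib_right[symmetric] sd_sum[OF polq] mu(2))
  finally show ?thesis .
qed

lemma visit_diff:
  assumes pol: "is_policy p" and polq: "is_policy q" and mu: "\<And>s. 0 \<le> mu s" "(\<Sum>s\<in>UNIV. mu s) = 1"
    and D: "\<And>s. dtv (p s) (q s) \<le> D" and g: "0 \<le> g" "g < 1"
  shows "(\<Sum>s\<in>UNIV. \<bar>visit P g q mu s - visit P g p mu s\<bar>) \<le> 2 * D * g / (1 - g)^2"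
proof -
  define en where "en t = (\<Sum>s\<in>UNIV. \<bar>state_dist P q mu t s - state_dist P p mu t s\<bar>)" for t
  have mua: "(\<Sum>s\<in>UNIV. \<bar>mu s\<bar>) = 1" using mu by simp
  have enb: "\<bar>en t\<bar> \<le> 2" for t
  proof -
    have "en t \<le> (\<Sum>s\<in>UNIV. \<bar>state_dist P q mu t s\<bar> + \<bar>state_dist P p mu t s\<bar>)"
      unfolding en_def by (rule sum_mono) (rule abs_triangle_ineq4)
    also have "\<dots> \<le> 2" using sd_abs[OF polq, of mu t] sd_abs[OF pol, of mu t] mua
      by (simp add: sum.distrib)
    finally show ?thesis unfolding en_def by (simp add: sum_nonneg)
  qed
  have Dnn: "0 \<le> D"
  proof -
    have "0 \<le> dtv (p undefined) (q undefined)" unfolding dtv_def by (simp add: sum_nonneg)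
    thus ?thesis using D[of undefined] by linarith
  qed
  have ens: "en (Suc t) \<le> en t + 2 * D" for t unfolding en_def by (rule en_step[OF pol polq mu D])
  let ?f = "\<lambda>t. g ^ t * en t"
  have sf: "summable ?f" by (rule summable_bnd[OF enb g])
  have sf1: "summable (\<lambda>t. g ^ t * en (Suc t))" by (rule summable_bnd[OF enb g])
  have sg: "summable (\<lambda>t. g ^ t * (2 * D))" using g by (intro summable_mult2) simp
  have en0: "en 0 = 0" unfolding en_def by simp
  have "suminf ?f - ?f 0 = (\<Sum>t. ?f (Suc t))" by (rule suminf_split_head[OF sf, symmetric])
  also have "\<dots> = g * (\<Sum>t. g ^ t * en (Suc t))"
    by (simp add: mult.assoc suminf_mult sf1)
  also have "(\<Sum>t. g ^ t * en (Suc t)) \<le> (\<Sum>t. ?f t + g ^ t * (2 * D))"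
    apply (rule suminf_le)
    using ens g apply (simp add: distrib_left[symmetric] mult_left_mono)
    using sf1 sf sg by (auto intro: summable_add)
  also have "\<dots> = suminf ?f + 2 * D / (1 - g)"
    using suminf_add[OF sf sg, symmetric] g
    by (simp add: suminf_mult2[symmetric] suminf_geometric)
  finally have ineq: "suminf ?f \<le> g * (suminf ?f + 2 * D / (1 - g))"
    using en0 g by (simp add: mult_left_mono)
  have Sb: "suminf ?f \<le> 2 * D * g / (1 - g)^2"
  proof -
    from ineq have h1: "suminf ?f * (1 - g) \<le> g * (2 * D / (1 - g))" by (simp add: algebra_simps)
    have h2: "suminf ?f * (1 - g) * (1 - g) \<le> g * (2 * D / (1 - g)) * (1 - g)"
      using mult_right_mono[OF h1, of "1 - g"] g by linarith
    have h3: "g * (2 * D / (1 - g)) * (1 - g) = 2 * D * g" using g by (simp add: field_simps)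
    have "0 < (1 - g)^2" using g by simp
    thus ?thesis using h2 h3 by (subst pos_le_divide_eq) (simp_all add: power2_eq_square mult.assoc)
  qed
  have "(\<Sum>s\<in>UNIV. \<bar>visit P g q mu s - visit P g p mu s\<bar>)
        \<le> (\<Sum>s\<in>UNIV. \<Sum>t. g ^ t * \<bar>state_dist P q mu t s - state_dist P p mu t s\<bar>)"
  proof (rule sum_mono)
    fix s
    have "visit P g q mu s - visit P g p mu s = (\<Sum>t. g ^ t * (state_dist P q mu t s - state_dist P p mu t s))"
      unfolding visit_def
      by (simp add: suminf_diff[OF summable_visit[OF polq g] summable_visit[OF pol g]] right_diff_distrib)
    moreover have "summable (\<lambda>t. \<bar>g ^ t * (state_dist P q mu t s - state_dist P p mu t s)\<bar>)"
    proof -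
      have "\<bar>\<bar>state_dist P q mu t s - state_dist P p mu t s\<bar>\<bar> \<le> 2" for t
        using sd_bnd[OF polq, of mu t s] sd_bnd[OF pol, of mu t s] mua by simp
      from summable_bnd[OF this g] show ?thesis using g by (simp add: abs_mult)
    qed
    ultimately show "\<bar>visit P g q mu s - visit P g p mu s\<bar> \<le> (\<Sum>t. g ^ t * \<bar>state_dist P q mu t s - state_dist P p mu t s\<bar>)"
      using summable_rabs g by (fastforce simp: abs_mult)
  qed
  also have "\<dots> = suminf ?f"
    unfolding en_def
    apply (subst suminf_sum[symmetric])
    subgoal for s
    proof -
      have "\<bar>\<bar>state_dist P q mu t s - state_dist P p mu t s\<bar>\<bar> \<le> 2" for t
        using sd_bnd[OF polq, of mu t s] sd_bnd[OF pol, of mu t s] mua by simp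
      from summable_bnd[OF this g] show ?thesis .
    qed
    by (simp add: sum_distrib_left)
  finally show ?thesis using Sb by linarith
qed


lemma visit_ge:
  assumes pol: "is_policy p" and mu: "\<And>s. 0 \<le> mu s" and g: "0 \<le> g" "g < 1"
  shows "mu s \<le> visit P g p mu s"
proof -
  have "sum (\<lambda>t. g ^ t * state_dist P p mu t s) {0} \<le> visit P g p mu s"
    unfolding visit_def
    by (rule sum_le_suminf[OF summable_visit[OF pol g]]) (auto intro!: mult_nonneg_nonneg sd_nn[OF pol mu] simp: g)
  thus ?thesis by simp
qed

lemma visit_nn:
  assumes pol: "is_policy p" and mu: "\<And>s. 0 \<le> mu s" and g: "0 \<le> g" "g < 1"
  shows "0 \<le> visit P g p mu s"
  unfolding visit_def by (rule suminf_nonneg[OF summable_visit[OF pol g]]) (simp add: sd_nn[OF pol mu] g)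

lemma visit_total:
  assumes pol: "is_policy p" and mu: "(\<Sum>s\<in>UNIV. mu s) = 1" and g: "0 \<le> g" "g < 1"
  shows "(\<Sum>s\<in>UNIV. visit P g p mu s) = 1 / (1 - g)"
proof -
  have "(\<Sum>s\<in>UNIV. visit P g p mu s) = (\<Sum>t. \<Sum>s\<in>UNIV. g ^ t * state_dist P p mu t s)"
    unfolding visit_def by (rule suminf_sum[symmetric], rule summable_visit[OF pol g])
  also have "\<dots> = (\<Sum>t. g ^ t)"
    by (simp add: sum_distrib_left[symmetric] sd_sum[OF pol] mu)
  also have "\<dots> = 1 / (1 - g)" using g by (simp add: suminf_geometric)
  finally show ?thesis .
qed

end

lemma greedy_ex:
  fixes A :: "'s::finite \<Rightarrow> 'a::finite \<Rightarrow> real"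
  shows "\<exists>am. \<forall>s b. A s b \<le> A s (am s)"
proof -
  have "\<forall>s. \<exists>a. \<forall>b. A s b \<le> A s a"
  proof
    fix s
    have "Max (range (A s)) \<in> range (A s)" by (rule Max_in) auto
    then obtain a where a: "A s a = Max (range (A s))" by (metis imageE)
    show "\<exists>a. \<forall>b. A s b \<le> A s a" using a by (intro exI[of _ a]) auto
  qed
  thus ?thesis by metis
qed

lemma aux_div:
  fixes c d p A K :: real
  assumes "c \<noteq> 0" "d \<noteq> 0" "p \<noteq> 0" "A \<noteq> 0"
  shows "K * d^2 / (p^2 * c^2) / (d * c * A) = K * d / (p^2 * c^3 * A)"
  using assms by (simp add: field_simps power2_eq_square power3_eq_cube)

theorem mainTheorem3:
  fixes P :: "'s::finite \<Rightarrow> 'a::finite \<Rightarrow> 's \<Rightarrow> real"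
    and r :: "'s \<Rightarrow> 'a \<Rightarrow> real"
    and \<rho>0 :: "'s \<Rightarrow> real"
    and \<gamma> \<delta> :: real
    and p pt :: "'s \<Rightarrow> 'a \<Rightarrow> real"
  assumes P_nonneg: "\<forall>s a s'. 0 \<le> P s a s'"
    and P_sum: "\<forall>s a. (\<Sum>s'\<in>UNIV. P s a s') = 1"
    and rho0_pos: "\<forall>s. 0 < \<rho>0 s"
    and rho0_sum: "(\<Sum>s\<in>UNIV. \<rho>0 s) = 1"
    and gamma: "0 < \<gamma>" "\<gamma> < 1"
    and pol: "is_policy p"
    and Astar_pos: "max_adv P r \<gamma> \<rho>0 p > 0"
    and delta_pos: "\<delta> > 0"
    and pit_pol: "is_policy pt"
    and pit_feas: "tv_div P \<gamma> \<rho>0 p pt \<le> \<delta>"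
    and pit_opt: "\<forall>q. is_policy q \<and> tv_div P \<gamma> \<rho>0 p q \<le> \<delta> \<longrightarrow>
                     surrogate P r \<gamma> \<rho>0 p q \<le> surrogate P r \<gamma> \<rho>0 p pt"
  shows "let ratio = (eta P r \<gamma> pt \<rho>0 - eta P r \<gamma> p \<rho>0) /
                     (surrogate P r \<gamma> \<rho>0 p pt - surrogate P r \<gamma> \<rho>0 p p);
             p0 = Min (range \<rho>0);
             Abar = Max {\<bar>Adv P r \<gamma> p s a\<bar> | s a. True};
             Astar = max_adv P r \<gamma> \<rho>0 p
         in ratio \<ge> min (1 - 4 * Abar * \<gamma> * \<delta>^2 / (p0^2 * (1 - \<gamma>)^2 * Astar))
                         (1 - 4 * Abar * \<gamma> * \<delta> / (p0^2 * (1 - \<gamma>)^3 * Astar))"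
proof -
  interpret mdp P by unfold_locales (use P_nonneg P_sum in auto)
  have g: "0 \<le> \<gamma>" "\<gamma> < 1" using gamma by auto
  have mu: "\<And>s. 0 \<le> \<rho>0 s" using rho0_pos by (simp add: less_imp_le)
  define A where "A = Adv P r \<gamma> p"
  define p0 where "p0 = Min (range \<rho>0)"
  define Abar where "Abar = Max {\<bar>Adv P r \<gamma> p s a\<bar> | s a. True}"
  define Astar where "Astar = max_adv P r \<gamma> \<rho>0 p"
  define vp where "vp = visit P \<gamma> p \<rho>0"
  define vt where "vt = visit P \<gamma> pt \<rho>0"
  define G where "G s = (\<Sum>a\<in>UNIV. pt s a * A s a)" for s
  have p0pos: "0 < p0" unfolding p0_def using Min_in[of "range \<rho>0"] rho0_pos by auto
  have p0le: "p0 \<le> \<rho>0 s" for s unfolding p0_def by (rule Min_le) auto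
  have Abar_ge: "\<bar>A s a\<bar> \<le> Abar" for s a
  proof -
    have eq: "{\<bar>Adv P r \<gamma> p s a\<bar> | s a. True} = (\<lambda>x. \<bar>Adv P r \<gamma> p (fst x) (snd x)\<bar>) ` UNIV"
    proof (rule set_eqI, rule iffI)
      fix y assume "y \<in> {\<bar>Adv P r \<gamma> p s a\<bar> | s a. True}"
      then obtain s a where "y = \<bar>Adv P r \<gamma> p s a\<bar>" by blast
      thus "y \<in> (\<lambda>x. \<bar>Adv P r \<gamma> p (fst x) (snd x)\<bar>) ` UNIV" using rangeI[where f="\<lambda>x. \<bar>Adv P r \<gamma> p (fst x) (snd x)\<bar>" and x="(s, a)"] by simp
    qed auto
    show ?thesis unfolding Abar_def A_def eq
      apply (rule Max_ge, simp)
      using rangeI[where f="\<lambda>x. \<bar>Adv P r \<gamma> p (fst x) (snd x)\<bar>" and x="(s, a)"] by simp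
  qed
  have Abar_nn: "0 \<le> Abar" using Abar_ge[of undefined undefined] by linarith
  have dtv_nn: "0 \<le> dtv (p s) (pt s)" for s unfolding dtv_def by (simp add: sum_nonneg)
  have dtvb: "dtv (p s) (pt s) \<le> \<delta> / p0" for s
  proof -
    have "p0 * dtv (p s) (pt s) \<le> vp s * dtv (p s) (pt s)"
      using p0le[of s] visit_ge[where mu="\<rho>0" and s=s, OF pol mu g] dtv_nn[of s] unfolding vp_def
      by (intro mult_right_mono) auto
    also have "\<dots> \<le> (\<Sum>s\<in>UNIV. vp s * dtv (p s) (pt s))"
      by (rule member_le_sum[where f="\<lambda>s. vp s * dtv (p s) (pt s)"])
        (auto intro!: mult_nonneg_nonneg dtv_nn simp: vp_def visit_nn[where mu="\<rho>0", OF pol mu g])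
    also have "\<dots> \<le> \<delta>" using pit_feas unfolding tv_div_def vp_def .
    finally show ?thesis using p0pos by (simp add: pos_le_divide_eq mult.commute)
  qed
  have Gb: "\<bar>G s\<bar> \<le> 2 * Abar * (\<delta> / p0)" for s
  proof -
    have "G s = (\<Sum>a\<in>UNIV. (pt s a - p s a) * A s a)"
      unfolding G_def A_def using adv_zero[where r=r and s=s, OF pol g]
      by (simp add: left_diff_distrib sum_subtractf)
    also have "\<bar>\<dots>\<bar> \<le> (\<Sum>a\<in>UNIV. \<bar>p s a - pt s a\<bar> * Abar)"
      apply (rule order_trans[OF sum_abs], rule sum_mono)
      by (simp add: abs_mult abs_minus_commute mult_left_mono Abar_ge)
    also have "\<dots> = 2 * Abar * dtv (p s) (pt s)"
      unfolding dtv_def by (simp add: sum_distrib_right[symmetric])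
    also have "\<dots> \<le> 2 * Abar * (\<delta> / p0)"
      using dtvb[of s] Abar_nn by (intro mult_left_mono) auto
    finally show ?thesis .
  qed
  define X where "X = surrogate P r \<gamma> \<rho>0 p pt - surrogate P r \<gamma> \<rho>0 p p"
  define Y where "Y = eta P r \<gamma> pt \<rho>0 - eta P r \<gamma> p \<rho>0"
  have Xeq: "X = (\<Sum>s\<in>UNIV. vp s * G s)"
    unfolding X_def surrogate_def vp_def G_def A_def by (simp add: adv_zero[OF pol g])
  have Yeq: "Y = (\<Sum>s\<in>UNIV. vt s * G s)"
    unfolding Y_def vt_def G_def A_def by (rule perf_diff[OF pol pit_pol g])
  define B where "B = 4 * Abar * \<gamma> * \<delta>^2 / (p0^2 * (1 - \<gamma>)^2)"
  have YX: "\<bar>Y - X\<bar> \<le> B"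
  proof -
    have "\<bar>Y - X\<bar> = \<bar>\<Sum>s\<in>UNIV. (vt s - vp s) * G s\<bar>"
      by (simp add: Xeq Yeq left_diff_distrib sum_subtractf)
    also have "\<dots> \<le> (\<Sum>s\<in>UNIV. \<bar>vt s - vp s\<bar> * (2 * Abar * (\<delta> / p0)))"
      apply (rule order_trans[OF sum_abs], rule sum_mono)
      unfolding abs_mult by (rule mult_left_mono[OF Gb abs_ge_zero])
    also have "\<dots> = (\<Sum>s\<in>UNIV. \<bar>vt s - vp s\<bar>) * (2 * Abar * (\<delta> / p0))"
      by (rule sum_distrib_right[symmetric])
    also have "\<dots> \<le> (2 * (\<delta> / p0) * \<gamma> / (1 - \<gamma>)^2) * (2 * Abar * (\<delta> / p0))"
      apply (rule mult_right_mono)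
      unfolding vt_def vp_def
      apply (rule visit_diff[where mu="\<rho>0", OF pol pit_pol mu rho0_sum dtvb g])
      using Abar_nn delta_pos p0pos by simp
    also have "\<dots> = B" unfolding B_def by (simp add: field_simps power2_eq_square)
    finally show ?thesis .
  qed
  have Bnn: "0 \<le> B" unfolding B_def using Abar_nn g by simp
  obtain am where am: "\<And>s b. A s b \<le> A s (am s)" using greedy_ex[of A] by blast
  define qs where "qs s a = (if a = am s then 1 else (0::real))" for s a
  have qs_pol: "is_policy qs" unfolding is_policy_def qs_def by simp
  have qsA: "(\<Sum>a\<in>UNIV. qs s a * A s a) = A s (am s)" for s
    unfolding qs_def by (simp add: sum_delta_mult[of "am s" "A s", simplified])
  have pa_le: "pol_adv P r \<gamma> \<rho>0 p q \<le> pol_adv P r \<gamma> \<rho>0 p qs" if q: "is_policy q" for q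
    unfolding pol_adv_def A_def[symmetric]
  proof (rule sum_mono, rule mult_left_mono)
    fix s
    have "(\<Sum>a\<in>UNIV. q s a * A s a) \<le> (\<Sum>a\<in>UNIV. q s a * A s (am s))"
      by (rule sum_mono, rule mult_left_mono[OF am pol_nn[OF q]])
    also have "\<dots> = A s (am s)" by (simp add: sum_distrib_right[symmetric] pol_sum[OF q])
    finally show "(\<Sum>a\<in>UNIV. q s a * A s a) \<le> (\<Sum>a\<in>UNIV. qs s a * A s a)" by (simp add: qsA)
    show "0 \<le> visit P \<gamma> p \<rho>0 s" by (rule visit_nn[where mu="\<rho>0", OF pol mu g])
  qed
  have Astar_le: "Astar \<le> pol_adv P r \<gamma> \<rho>0 p qs"
    unfolding Astar_def max_adv_def
    by (rule cSup_least) (auto intro: qs_pol pa_le)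
  have Astar_pos': "0 < Astar" using Astar_pos unfolding Astar_def .
  define \<alpha> where "\<alpha> = min 1 (\<delta> * (1 - \<gamma>))"
  have al: "0 < \<alpha>" "\<alpha> \<le> 1" "\<alpha> \<le> \<delta> * (1 - \<gamma>)" unfolding \<alpha>_def using delta_pos g by auto
  define qm where "qm s a = (1 - \<alpha>) * p s a + \<alpha> * qs s a" for s a
  have qm_pol: "is_policy qm" unfolding is_policy_def qm_def
    using pol_nn[OF pol] pol_nn[OF qs_pol] pol_sum[OF pol] pol_sum[OF qs_pol] al
    by (auto simp: sum.distrib sum_distrib_left[symmetric])
  have dtv_qm: "dtv (p s) (qm s) \<le> \<alpha>" for s
  proof -
    have e: "\<bar>p s a - qm s a\<bar> = \<alpha> * \<bar>p s a - qs s a\<bar>" for a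
    proof -
      have "p s a - qm s a = \<alpha> * (p s a - qs s a)" by (simp add: qm_def algebra_simps)
      thus ?thesis using al by (simp add: abs_mult)
    qed
    have "dtv (p s) (qm s) = \<alpha> * dtv (p s) (qs s)"
      unfolding dtv_def e by (simp add: sum_distrib_left[symmetric])
    also have "dtv (p s) (qs s) \<le> 1"
    proof -
      have "dtv (p s) (qs s) \<le> (1/2) * (\<Sum>a\<in>UNIV. p s a + qs s a)"
        unfolding dtv_def
        by (rule mult_left_mono, rule sum_mono)
          (use pol_nn[OF pol] pol_nn[OF qs_pol] in \<open>auto simp: abs_le_iff\<close>)
      thus ?thesis by (simp add: sum.distrib pol_sum[OF pol] pol_sum[OF qs_pol])
    qed
    hence "\<alpha> * dtv (p s) (qs s) \<le> \<alpha>" using al by (simp add: mult_left_le)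
    finally show ?thesis .
  qed
  have feas: "tv_div P \<gamma> \<rho>0 p qm \<le> \<delta>"
  proof -
    have "tv_div P \<gamma> \<rho>0 p qm \<le> (\<Sum>s\<in>UNIV. vp s * \<alpha>)"
      unfolding tv_div_def vp_def
      by (rule sum_mono, rule mult_left_mono[OF dtv_qm visit_nn[where mu="\<rho>0", OF pol mu g]])
    also have "\<dots> = \<alpha> / (1 - \<gamma>)"
      by (simp add: sum_distrib_right[symmetric] vp_def visit_total[OF pol rho0_sum g])
    also have "\<dots> \<le> \<delta>" using al g by (simp add: pos_divide_le_eq)
    finally show ?thesis .
  qed
  have sqm: "surrogate P r \<gamma> \<rho>0 p qm - surrogate P r \<gamma> \<rho>0 p p = \<alpha> * pol_adv P r \<gamma> \<rho>0 p qs"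
    unfolding surrogate_def pol_adv_def qm_def
    apply (simp add: adv_zero[OF pol g] distrib_right sum.distrib mult.assoc sum_distrib_left[symmetric]
        distrib_left mult.left_commute[of \<alpha>])
    by (simp add: sum_distrib_left mult_ac)
  have Xge: "\<alpha> * Astar \<le> X"
  proof -
    have "\<alpha> * Astar \<le> \<alpha> * pol_adv P r \<gamma> \<rho>0 p qs" using Astar_le al by (simp add: mult_left_mono)
    also have "\<dots> \<le> X" unfolding X_def using pit_opt qm_pol feas sqm by force
    finally show ?thesis .
  qed
  have Xpos: "0 < X" using Xge al Astar_pos' by (meson mult_pos_pos order_less_le_trans)
  have ratio: "Y / X \<ge> 1 - B / (\<alpha> * Astar)"
  proof -
    have "Y / X = 1 + (Y - X) / X" using Xpos by (simp add: field_simps)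
    moreover have "(Y - X) / X \<ge> - B / X"
    proof -
      have "- B \<le> Y - X" using YX by linarith
      hence "- B / X \<le> (Y - X) / X" using Xpos by (intro divide_right_mono) auto
      thus ?thesis .
    qed
    moreover have "B / X \<le> B / (\<alpha> * Astar)"
      using Bnn Xge al Astar_pos' Xpos by (intro divide_left_mono) (auto intro!: mult_pos_pos)
    ultimately show ?thesis by (simp add: field_simps)
  qed
  have final: "min (1 - 4 * Abar * \<gamma> * \<delta>^2 / (p0^2 * (1 - \<gamma>)^2 * Astar))
                         (1 - 4 * Abar * \<gamma> * \<delta> / (p0^2 * (1 - \<gamma>)^3 * Astar)) \<le> Y / X"
  proof (cases "1 \<le> \<delta> * (1 - \<gamma>)")
    case True
    hence "\<alpha> = 1" unfolding \<alpha>_def by simp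
    hence "Y / X \<ge> 1 - 4 * Abar * \<gamma> * \<delta>^2 / (p0^2 * (1 - \<gamma>)^2 * Astar)"
      using ratio unfolding B_def by simp
    thus ?thesis by linarith
  next
    case False
    hence "\<alpha> = \<delta> * (1 - \<gamma>)" unfolding \<alpha>_def by simp
    moreover have "B / (\<delta> * (1 - \<gamma>) * Astar) = 4 * Abar * \<gamma> * \<delta> / (p0^2 * (1 - \<gamma>)^3 * Astar)"
      unfolding B_def using delta_pos g p0pos Astar_pos'
      by (subst aux_div[where K="4 * Abar * \<gamma>", symmetric]) auto
    ultimately have "Y / X \<ge> 1 - 4 * Abar * \<gamma> * \<delta> / (p0^2 * (1 - \<gamma>)^3 * Astar)"
      using ratio by simp
    thus ?thesis by linarith
  qed
  show ?thesis using final unfolding Let_def X_def Y_def p0_def Abar_def Astar_def by simp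
qed

end
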